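(* For every real $2\times n$ matrix $X$ there exists a real $2\times n$ matrix $Y$ with $\Delta_{i,j}(Y)\ge 0$ for all $1\le i<j\le n$ such that the multiset $\{\Delta_{i,j}(Y):1\le i<j\le n\}$ coincides with the multiset $\{|\Delta_{i,j}(X)|:1\le i<j\le n\}$.
   Context: For a real $2\times n$ matrix $X$ and $1\le i<j\le n$, $\Delta_{i,j}(X)$ is the determinant of the $2\times2$ submatrix formed by columns $i$ and $j$. *)

theory Defs
  imports "HOL-Analysis.Analysis" "HOL-Library.Multiset"
begin

(* A real 2 x n matrix is represented as X :: nat => nat => real, with X r c the
   entry in row r (r \<in> {0,1}) and column c (c < n); entries outside are irrelevant.
   Columns are 0-indexed: column c here is column c+1 of the paper. *)

definition minor2 :: "(nat \<Rightarrow> nat \<Rightarrow> real) \<Rightarrow> nat \<Rightarrow> nat \<Rightarrow> real" where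
  "minor2 X i j = X 0 i * X 1 j - X 0 j * X 1 i"

definition pairs_lt :: "nat \<Rightarrow> (nat \<times> nat) multiset" where
  "pairs_lt n = mset_set {(i, j). i < j \<and> j < n}"

end

theory Submission
  imports Defs
begin

lemma key_det:
  fixes a b c d :: real
  assumes b: "b \<ge> 0" and d: "d \<ge> 0"
    and k: "- a / (\<bar>a\<bar> + b) \<le> - c / (\<bar>c\<bar> + d)"
  shows "a * d - c * b \<ge> 0"
proof (cases "\<bar>a\<bar> + b = 0 \<or> \<bar>c\<bar> + d = 0")
  case True
  then have "(a = 0 \<and> b = 0) \<or> (c = 0 \<and> d = 0)" using b d by linarith
  then show ?thesis by auto
next
  case False
  then have p1: "\<bar>a\<bar> + b > 0" and p2: "\<bar>c\<bar> + d > 0" using b d by auto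
  from k have k2: "c * (\<bar>a\<bar> + b) \<le> a * (\<bar>c\<bar> + d)"
    using p1 p2 by (simp add: divide_simps)
  consider "a \<ge> 0" "c \<ge> 0" | "a \<le> 0" "c \<le> 0" | "a \<ge> 0" "c \<le> 0" | "a \<le> 0" "c \<ge> 0"
    by linarith
  then show ?thesis
  proof cases
    case 1 then show ?thesis using k2 by (simp add: algebra_simps)
  next
    case 2 then show ?thesis using k2 by (simp add: algebra_simps)
  next
    case 3 then show ?thesis using b d
      by (smt (verit) mult_nonneg_nonneg mult_nonpos_nonneg)
  next
    case 4
    have l: "c * (\<bar>a\<bar> + b) \<ge> 0" using 4 b by simp
    have r: "a * (\<bar>c\<bar> + d) \<le> 0" using 4 d by (simp add: mult_nonpos_nonneg)
    have e1: "c * (\<bar>a\<bar> + b) = 0" using l r k2 by linarith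
    have e2: "a * (\<bar>c\<bar> + d) = 0" using l r k2 by linarith
    have "a = 0" using e2 p2 by simp
    moreover have "c * b = 0" using e1 4 \<open>a = 0\<close> by auto
    ultimately show ?thesis by auto
  qed
qed

theorem mainTheorem7:
  fixes n :: nat and X :: "nat \<Rightarrow> nat \<Rightarrow> real"
  shows "\<exists>Y :: nat \<Rightarrow> nat \<Rightarrow> real.
           (\<forall>i j. i < j \<and> j < n \<longrightarrow> minor2 Y i j \<ge> 0) \<and>
           image_mset (\<lambda>(i, j). minor2 Y i j) (pairs_lt n) =
           image_mset (\<lambda>(i, j). \<bar>minor2 X i j\<bar>) (pairs_lt n)"
proof -
  define s :: "nat \<Rightarrow> real" where "s i = (if X 1 i < 0 then -1 else 1)" for i
  define W where "W r i = s i * X r i" for r i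
  have W1: "W 1 i \<ge> 0" for i by (simp add: W_def s_def)
  have absW: "\<bar>minor2 W p q\<bar> = \<bar>minor2 X p q\<bar>" for p q
    by (simp add: W_def s_def minor2_def algebra_simps abs_if)
  define f where "f i = - W 0 i / (\<bar>W 0 i\<bar> + W 1 i)" for i
  define L where "L = sort_key f [0..<n]"
  have lenL: "length L = n" by (simp add: L_def)
  have distL: "distinct L" by (simp add: L_def)
  have setL: "set L = {0..<n}" by (simp add: L_def)
  have sortL: "sorted (map f L)" by (simp add: L_def)
  define Y where "Y r k = W r (L ! k)" for r k
  have Ynn: "minor2 Y k l \<ge> 0" if "k < l" "l < n" for k l
  proof -
    have "f (L ! k) \<le> f (L ! l)"
      using sorted_nth_mono[OF sortL, of k l] that lenL by simp
    then have "W 0 (L!k) * W 1 (L!l) - W 0 (L!l) * W 1 (L!k) \<ge> 0"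
      using key_det[OF W1 W1] unfolding f_def by blast
    then show ?thesis by (simp add: minor2_def Y_def)
  qed
  define g where "g = (\<lambda>(k::nat, l::nat). (min (L!k) (L!l), max (L!k) (L!l)))"
  define A where "A = {(i::nat, j). i < j \<and> j < n}"
  have finA: "finite A"
    by (rule finite_subset[of _ "{0..<n} \<times> {0..<n}"]) (auto simp: A_def)
  have Lk: "L ! k < n" if "k < n" for k
    using setL lenL that nth_mem by fastforce
  have Linj: "L ! k = L ! l \<longleftrightarrow> k = l" if "k < n" "l < n" for k l
    using distL lenL that nth_eq_iff_index_eq by blast
  have gA: "g ` A \<subseteq> A"
  proof
    fix x assume "x \<in> g ` A"
    then obtain k l where "k < l" "l < n" "x = g (k, l)" by (auto simp: A_def)
    moreover have "L!k \<noteq> L!l" using Linj[of k l] \<open>k<l\<close> \<open>l<n\<close> by simp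
    ultimately show "x \<in> A" using Lk[of k] Lk[of l] by (auto simp: g_def A_def min_def max_def)
  qed
  have ginj: "inj_on g A"
  proof (rule inj_onI)
    fix x y assume "x \<in> A" "y \<in> A" "g x = g y"
    then obtain k l k' l' where x: "x = (k,l)" "k < l" "l < n" and y: "y = (k',l')" "k' < l'" "l' < n"
      by (auto simp: A_def)
    have "min (L!k) (L!l) = min (L!k') (L!l')" "max (L!k) (L!l) = max (L!k') (L!l')"
      using \<open>g x = g y\<close> x y by (auto simp: g_def)
    then have "(L!k = L!k' \<and> L!l = L!l') \<or> (L!k = L!l' \<and> L!l = L!k')"
      by (auto simp: min_def max_def split: if_splits)
    then have "(k = k' \<and> l = l') \<or> (k = l' \<and> l = k')"
      using Linj x y by (metis less_trans)
    then show "x = y" using x y by auto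
  qed
  have gAeq: "g ` A = A"
    using endo_inj_surj[OF finA gA ginj] .
  have "image_mset (\<lambda>(i, j). minor2 Y i j) (pairs_lt n) =
        image_mset ((\<lambda>(i, j). \<bar>minor2 X i j\<bar>) \<circ> g) (pairs_lt n)"
  proof (rule image_mset_cong)
    fix x assume "x \<in># pairs_lt n"
    then obtain k l where x: "x = (k,l)" "k < l" "l < n"
      using finA by (auto simp: pairs_lt_def A_def)
    have "minor2 Y k l = \<bar>minor2 Y k l\<bar>" using Ynn x by simp
    also have "\<dots> = \<bar>minor2 X (L!k) (L!l)\<bar>"
      using absW by (simp add: minor2_def Y_def)
    also have "\<dots> = \<bar>minor2 X (min (L!k) (L!l)) (max (L!k) (L!l))\<bar>"
      by (simp add: minor2_def min_def max_def abs_minus_commute)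
    finally show "(\<lambda>(i, j). minor2 Y i j) x = ((\<lambda>(i, j). \<bar>minor2 X i j\<bar>) \<circ> g) x"
      using x by (simp add: g_def)
  qed
  also have "\<dots> = image_mset (\<lambda>(i, j). \<bar>minor2 X i j\<bar>) (image_mset g (pairs_lt n))"
    by (simp add: image_mset.compositionality)
  also have "image_mset g (pairs_lt n) = pairs_lt n"
    unfolding pairs_lt_def A_def[symmetric]
    using image_mset_mset_set[OF ginj] gAeq by simp
  finally show ?thesis using Ynn by blast
qed

end
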